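(* Let $n\ge1$ be an integer and let $\underline\psi_1,\dots,\underline\psi_n\in[0,1]$ satisfy $\underline\psi_n\le n/(n+1)$ and \[ \frac{\underline\psi_j}{j}\le\frac{\underline\psi_{j+1}}{j+1}\quad\text{and}\quad \frac{1-\underline\psi_j}{n+1-j}\le\frac{1-\underline\psi_{j+1}}{n-j}\qquad(1\le j\le n-1). \] Then there exists a finite non-empty subset $E$ of $\bar\Delta^{(n+1)}$ such that $\underline\psi_j=\min\psi_j(E)$ for each $j=1,\dots,n$.
   Context: $\bar\Delta^{(n+1)}=\{(a_1,\dots,a_{n+1})\in\mathbb{R}^{n+1}: 0\le a_1\le\cdots\le a_{n+1},\ a_1+\cdots+a_{n+1}=1\}$; for $j=1,\dots,n+1$, $\psi_j\colon\bar\Delta^{(n+1)}\to\mathbb{R}$ is $\psi_j(a_1,\dots,a_{n+1})=a_1+\cdots+a_j$. *)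

theory Defs
  imports Complex_Main
begin

text \<open>Points of R^(n+1) are represented as functions nat => real with coordinates
  a 1, ..., a (n+1); coordinates outside {1..n+1} are fixed to 0 so that each point
  of R^(n+1) has a unique representative.\<close>

definition ordered_simplex :: "nat \<Rightarrow> (nat \<Rightarrow> real) set" where
  "ordered_simplex m = {a. (\<forall>i. i \<notin> {1..m} \<longrightarrow> a i = 0)
      \<and> 0 \<le> a 1
      \<and> (\<forall>i\<in>{1..<m}. a i \<le> a (Suc i))
      \<and> (\<Sum>i=1..m. a i) = 1}"

definition psi :: "nat \<Rightarrow> (nat \<Rightarrow> real) \<Rightarrow> real" where
  "psi j a = (\<Sum>i=1..j. a i)"

end

theory Submission
  imports Defs
begin

lemma chainA:
  fixes n :: nat and L :: "nat \<Rightarrow> real"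
  assumes h: "\<forall>j\<in>{1..n-1}. L j / real j \<le> L (j + 1) / real (j + 1)"
    and jk: "1 \<le> j" "j \<le> k" "k \<le> n"
  shows "L j / real j \<le> L k / real k"
  using jk(2,3)
proof (induction k rule: dec_induct)
  case base then show ?case by simp
next
  case (step m)
  then have "m \<in> {1..n-1}" using jk by auto
  then have "L m / real m \<le> L (m + 1) / real (m + 1)" using h by blast
  with step show ?case by simp
qed

lemma chainB:
  fixes n :: nat and L :: "nat \<Rightarrow> real"
  assumes h: "\<forall>j\<in>{1..n-1}. (1 - L j) / real (n + 1 - j) \<le> (1 - L (j + 1)) / real (n - j)"
    and jk: "1 \<le> k" "k \<le> j" "j \<le> n"
  shows "(1 - L k) / real (n + 1 - k) \<le> (1 - L j) / real (n + 1 - j)"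
  using jk(2,3)
proof (induction j rule: dec_induct)
  case base then show ?case by simp
next
  case (step m)
  then have "m \<in> {1..n-1}" using jk by auto
  then have "(1 - L m) / real (n + 1 - m) \<le> (1 - L (m + 1)) / real (n - m)" using h by blast
  moreover have "(1 - L k) / real (n + 1 - k) \<le> (1 - L m) / real (n + 1 - m)"
    using step.IH step.prems step.hyps by linarith
  moreover have "n - m = n + 1 - Suc m" by simp
  ultimately show ?case by (metis Suc_eq_plus1 order_trans)
qed

lemma psi_pt:
  fixes n k j :: nat and x c :: real
  defines "a \<equiv> (\<lambda>i. if 1 \<le> i \<and> i \<le> k then x else if k < i \<and> i \<le> n + 1 then c else 0)"
  assumes "j \<le> n + 1"
  shows "psi j a = (if j \<le> k then real j * x else real k * x + real (j - k) * c)"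
proof (cases "j \<le> k")
  case True
  have "psi j a = (\<Sum>i=1..j. x)" unfolding psi_def
    using True by (intro sum.cong) (auto simp: a_def)
  then show ?thesis using True by simp
next
  case False
  have u: "{1..j} = {1..k} \<union> {k+1..j}" using False by auto
  have "psi j a = (\<Sum>i=1..k. a i) + (\<Sum>i=k+1..j. a i)"
    unfolding psi_def u by (rule sum.union_disjoint) auto
  also have "(\<Sum>i=1..k. a i) = (\<Sum>i=1..k. x)" by (rule sum.cong) (auto simp: a_def)
  also have "(\<Sum>i=k+1..j. a i) = (\<Sum>i=k+1..j. c)" by (rule sum.cong) (use assms in \<open>auto simp: a_def\<close>)
  finally show ?thesis using False by simp
qed

theorem mainTheorem11:
  fixes n :: nat and L :: "nat \<Rightarrow> real"
  assumes "n \<ge> 1"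
    and "\<forall>j\<in>{1..n}. 0 \<le> L j \<and> L j \<le> 1"
    and "L n \<le> real n / real (n + 1)"
    and "\<forall>j\<in>{1..n-1}. L j / real j \<le> L (j + 1) / real (j + 1)
           \<and> (1 - L j) / real (n + 1 - j) \<le> (1 - L (j + 1)) / real (n - j)"
  shows "\<exists>E. finite E \<and> E \<noteq> {} \<and> E \<subseteq> ordered_simplex (n + 1)
           \<and> (\<forall>j\<in>{1..n}. L j = Min (psi j ` E))"
proof -
  have hA: "\<forall>j\<in>{1..n-1}. L j / real j \<le> L (j + 1) / real (j + 1)" using assms(4) by blast
  have hB: "\<forall>j\<in>{1..n-1}. (1 - L j) / real (n + 1 - j) \<le> (1 - L (j + 1)) / real (n - j)"
    using assms(4) by blast
  define x where "x k = L k / real k" for k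
  define c where "c k = (1 - L k) / real (n + 1 - k)" for k
  define pt where "pt k = (\<lambda>i. if 1 \<le> i \<and> i \<le> k then x k else if k < i \<and> i \<le> n + 1 then c k else 0)" for k
  have ps: "psi j (pt k) = (if j \<le> k then real j * x k else real k * x k + real (j - k) * c k)"
    if "j \<le> n + 1" for j k
    unfolding pt_def by (rule psi_pt) (use that in auto)
  have Lk: "L k = real k * x k" if "k \<in> {1..n}" for k using that by (auto simp: x_def)
  have Lc: "1 - L k = real (n + 1 - k) * c k" if "k \<in> {1..n}" for k using that by (auto simp: c_def)
  have xc: "x k \<le> c k" if k: "k \<in> {1..n}" for k
  proof -
    have "x k \<le> L n / real n" unfolding x_def by (rule chainA[OF hA]) (use k in auto)
    also have "\<dots> \<le> 1 / real (n + 1)" using assms(1,3) by (simp add: field_simps)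
    finally have x1: "x k * real (n + 1) \<le> 1" by (simp add: field_simps)
    have pos: "real (n + 1 - k) > 0" using k by auto
    have "x k * real (n + 1 - k) \<le> 1 - L k" using x1 k Lk[OF k] by (simp add: of_nat_diff algebra_simps)
    then show ?thesis unfolding c_def using pos by (simp add: field_simps)
  qed
  have x0: "0 \<le> x k" if "k \<in> {1..n}" for k using assms(2) that by (auto simp: x_def)
  have mem: "pt k \<in> ordered_simplex (n + 1)" if k: "k \<in> {1..n}" for k
  proof -
    have "psi (n+1) (pt k) = 1" using ps[of "n+1" k] k Lk[OF k] Lc[OF k] by auto
    moreover have "\<forall>i\<in>{1..<n+1}. pt k i \<le> pt k (Suc i)" using xc[OF k] k by (auto simp: pt_def)
    moreover have "0 \<le> pt k 1" using x0[OF k] k by (auto simp: pt_def)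
    ultimately show ?thesis unfolding ordered_simplex_def psi_def using k by (auto simp: pt_def)
  qed
  have lower: "L j \<le> psi j (pt k)" if j: "j \<in> {1..n}" and k: "k \<in> {1..n}" for j k
  proof (cases "j \<le> k")
    case True
    have "x j \<le> x k" unfolding x_def by (rule chainA[OF hA]) (use j k True in auto)
    then have "real j * x j \<le> real j * x k" by (simp add: mult_left_mono)
    then show ?thesis using ps[of j k] j True Lk[OF j] by auto
  next
    case False
    have "c k \<le> c j" unfolding c_def by (rule chainB[OF hB]) (use j k False in auto)
    then have m: "real (n + 1 - j) * c k \<le> real (n + 1 - j) * c j" by (simp add: mult_left_mono)
    have "psi j (pt k) = real k * x k + real (j - k) * c k" using ps[of j k] j False by auto
    also have "\<dots> = 1 - real (n + 1 - j) * c k"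
    proof -
      have e1: "real k * x k = 1 - real (n+1-k) * c k" using Lk[OF k] Lc[OF k] by linarith
      have "n+1-k = (n+1-j)+(j-k)" using False j k by auto
      then have e2: "real (n+1-k) = real (n+1-j) + real (j-k)" by (metis of_nat_add)
      show ?thesis unfolding e1 e2 by (simp add: algebra_simps)
    qed
    finally show ?thesis using m Lc[OF j] by linarith
  qed
  have eq: "psi j (pt j) = L j" if j: "j \<in> {1..n}" for j using ps[of j j] j Lk[OF j] by auto
  show ?thesis
  proof (intro exI[of _ "pt ` {1..n}"] conjI ballI)
    show "finite (pt ` {1..n})" by simp
    show "pt ` {1..n} \<noteq> {}" using assms(1) by auto
    show "pt ` {1..n} \<subseteq> ordered_simplex (n + 1)" using mem by auto
    fix j assume j: "j \<in> {1..n}"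
    show "L j = Min (psi j ` pt ` {1..n})"
    proof (rule sym, rule Min_eqI)
      show "finite (psi j ` pt ` {1..n})" by simp
      show "\<And>y. y \<in> psi j ` pt ` {1..n} \<Longrightarrow> L j \<le> y" using lower j by auto
      show "L j \<in> psi j ` pt ` {1..n}" using eq[OF j] j by force
    qed
  qed
qed

end
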